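(* Let $f_k:\mathbb{R}^n\to\mathbb{R}$ be convex, continuously differentiable, $L_k$-smooth and bounded below, $k=1,\dots,N$, and let $L_{\max}=\max_kL_k$. Set $\tau=\frac{2}{\mu_{\min}+L_{\max}}$ if every $f_k$ is additionally $\mu_k$-strongly convex (with $\mu_{\min}=\min_k\mu_k$), and $\tau=\frac1{L_{\max}}$ otherwise. Let $G_\theta$ be any of the parametrisations (P1)–(P4) and $\tilde\theta$ a parameter with $G_{\tilde\theta}=\tau I$. Given initial points $x_k^0$, define iterates $x_k^{t+1}=x_k^t-G_{\theta_t}\nabla f_k(x_k^t)$, where at each $t$ the parameter $\theta_t$ satisfies $g_t(\theta_t)\le g_t(\tilde\theta)$, with $g_t(\theta)=\frac1N\sum_{k=1}^N f_k(x_k^t-G_\theta\nabla f_k(x_k^t))$. Then $\nabla f_k(x_k^t)\to0$ as $t\to\infty$ for every $k\in\{1,\dots,N\}$.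
   Context: Parametrisations: (P1) $G_\alpha=\alpha I$; (P2) $G_p=\operatorname{diag}(p)$; (P3) $G_P=P\in\mathbb{R}^{n\times n}$; (P4) $G_\kappa x=\kappa\ast x$ (2D zero-padded convolution of an image $x\in\mathbb{R}^{m_1\times m_2}$, $n=m_1m_2$, with a kernel $\kappa$). A function is $L$-smooth if its gradient is $L$-Lipschitz; $\mu$-strongly convex if $f-\frac\mu2\|\cdot\|_2^2$ is convex. *)

theory Defs
  imports "HOL-Analysis.Analysis"
begin

definition strongly_convex :: "real \<Rightarrow> ('a::real_inner \<Rightarrow> real) \<Rightarrow> bool" where
  "strongly_convex mu f \<longleftrightarrow> convex_on UNIV (\<lambda>x. f x - mu / 2 * (norm x)^2)"

definition P1 :: "real \<Rightarrow> real^'n \<Rightarrow> real^'n" where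
  "P1 alpha x = alpha *\<^sub>R x"

definition P2 :: "real^'n \<Rightarrow> real^'n \<Rightarrow> real^'n" where
  "P2 p x = (\<chi> i. p $ i * x $ i)"

definition P3 :: "real^'n^'n \<Rightarrow> real^'n \<Rightarrow> real^'n" where
  "P3 P x = P *v x"

definition pos :: "'a::{finite,linorder} \<Rightarrow> int" where
  "pos i = int (card {j. j < i})"

text \<open>(P4) G_kappa x = kappa * x: 2D zero-padded ("same") convolution of an image
  x in R^(m1 x m2) (pixels indexed by 'm1 x 'm2) with a kernel kappa, given by its
  values at integer offsets; entries outside the image are treated as zero.\<close>
definition P4 :: "(int \<times> int \<Rightarrow> real) \<Rightarrow> real^('m1::{finite,linorder} \<times> 'm2::{finite,linorder})
                    \<Rightarrow> real^('m1 \<times> 'm2)" where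
  "P4 kappa x = (\<chi> ij. \<Sum>kl\<in>UNIV. kappa (pos (fst ij) - pos (fst kl), pos (snd ij) - pos (snd kl)) * x $ kl)"

definition thm13_claim :: "('p \<Rightarrow> real^'n \<Rightarrow> real^'n) \<Rightarrow> bool" where
  "thm13_claim G \<longleftrightarrow>
    (\<forall>(N::nat) (f::nat \<Rightarrow> real^'n \<Rightarrow> real) (grad::nat \<Rightarrow> real^'n \<Rightarrow> real^'n)
       (L::nat \<Rightarrow> real) (mu::nat \<Rightarrow> real) (tau::real) (theta_tilde::'p)
       (x::nat \<Rightarrow> nat \<Rightarrow> real^'n) (theta::nat \<Rightarrow> 'p).
      let Lmax = Max (L ` {1..N});
          g = (\<lambda>t th. (1 / real N) * (\<Sum>k=1..N. f k (x k t - G th (grad k (x k t)))))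
      in
      N \<ge> 1 \<longrightarrow>
      (\<forall>k\<in>{1..N}. convex_on UNIV (f k)) \<longrightarrow>
      (\<forall>k\<in>{1..N}. \<forall>y. (f k has_derivative (\<lambda>h. grad k y \<bullet> h)) (at y)) \<longrightarrow>
      (\<forall>k\<in>{1..N}. continuous_on UNIV (grad k)) \<longrightarrow>
      (\<forall>k\<in>{1..N}. 0 < L k \<and> (\<forall>y z. norm (grad k y - grad k z) \<le> L k * norm (y - z))) \<longrightarrow>
      (\<forall>k\<in>{1..N}. bdd_below (range (f k))) \<longrightarrow>
      (tau = 1 / Lmax \<or>
        ((\<forall>k\<in>{1..N}. 0 < mu k \<and> strongly_convex (mu k) (f k)) \<and>
         tau = 2 / (Min (mu ` {1..N}) + Lmax))) \<longrightarrow>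
      G theta_tilde = (\<lambda>v. tau *\<^sub>R v) \<longrightarrow>
      (\<forall>k\<in>{1..N}. \<forall>t. x k (Suc t) = x k t - G (theta t) (grad k (x k t))) \<longrightarrow>
      (\<forall>t. g t (theta t) \<le> g t theta_tilde) \<longrightarrow>
      (\<forall>k\<in>{1..N}. (\<lambda>t. grad k (x k t)) \<longlonglongrightarrow> 0))"

end

theory Submission imports Defs begin
lemma descent:
  fixes f :: "'a::real_inner \<Rightarrow> real"
  assumes der: "\<forall>y. (f has_derivative (\<lambda>h. grad y \<bullet> h)) (at y)"
   and lip: "\<forall>y z. norm (grad y - grad z) \<le> L * norm (y - z)"
  shows "f (x + d) \<le> f x + grad x \<bullet> d + L/2 * (norm d)^2"
proof -
  define \<psi> where "\<psi> s = f (x + s *\<^sub>R d) - s * (grad x \<bullet> d) - L/2 * s^2 * (norm d)^2" for s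
  have "\<psi> 1 \<le> \<psi> 0"
  proof (rule DERIV_nonpos_imp_nonincreasing[of 0 1])
    fix s :: real assume s: "0 \<le> s" "s \<le> 1"
    have d1: "((\<lambda>s. x + s *\<^sub>R d) has_derivative (\<lambda>h. h *\<^sub>R d)) (at s)"
      by (auto intro!: derivative_eq_intros)
    have d2: "((\<lambda>s. f (x + s *\<^sub>R d)) has_derivative (\<lambda>h. grad (x + s *\<^sub>R d) \<bullet> (h *\<^sub>R d))) (at s)"
      using has_derivative_compose[OF d1 der[rule_format]] by simp
    have "(\<lambda>h. grad (x + s *\<^sub>R d) \<bullet> (h *\<^sub>R d)) = (*) (grad (x + s *\<^sub>R d) \<bullet> d)"
      by (auto simp: fun_eq_iff)
    with d2 have d3: "((\<lambda>s. f (x + s *\<^sub>R d)) has_real_derivative (grad (x + s *\<^sub>R d) \<bullet> d)) (at s)"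
      by (simp add: has_field_derivative_def)
    have D: "(\<psi> has_real_derivative (grad (x + s *\<^sub>R d) \<bullet> d - grad x \<bullet> d - L/2 * (2 * s) * (norm d)^2)) (at s)"
      unfolding \<psi>_def
      by (rule derivative_eq_intros d3 | simp)+
    have "(grad (x + s *\<^sub>R d) - grad x) \<bullet> d \<le> norm (grad (x + s *\<^sub>R d) - grad x) * norm d"
      by (rule norm_cauchy_schwarz)
    also have "\<dots> \<le> L * norm (s *\<^sub>R d) * norm d"
      using lip[rule_format, of "x + s *\<^sub>R d" x] by (simp add: mult_right_mono)
    also have "\<dots> = L * s * (norm d)^2" using s by (simp add: power2_eq_square)
    finally have "grad (x + s *\<^sub>R d) \<bullet> d - grad x \<bullet> d - L/2 * (2 * s) * (norm d)^2 \<le> 0"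
      by (simp add: inner_diff_left)
    with D show "\<exists>y. (\<psi> has_real_derivative y) (at s) \<and> y \<le> 0" by blast
  qed simp
  then show ?thesis by (simp add: \<psi>_def)
qed

lemma general:
  fixes G :: "'p \<Rightarrow> real^'n \<Rightarrow> real^'n"
    and f :: "nat \<Rightarrow> real^'n \<Rightarrow> real" and grad :: "nat \<Rightarrow> real^'n \<Rightarrow> real^'n"
    and x :: "nat \<Rightarrow> nat \<Rightarrow> real^'n" and theta :: "nat \<Rightarrow> 'p"
  assumes N: "N \<ge> 1"
    and der: "\<forall>k\<in>{1..N}. \<forall>y. (f k has_derivative (\<lambda>h. grad k y \<bullet> h)) (at y)"
    and Lk: "\<forall>k\<in>{1..N}. 0 < L k \<and> (\<forall>y z. norm (grad k y - grad k z) \<le> L k * norm (y - z))"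
    and bdd: "\<forall>k\<in>{1..N}. bdd_below (range (f k))"
    and tau: "tau = 1 / Max (L ` {1..N}) \<or>
        ((\<forall>k\<in>{1..N}. 0 < mu k \<and> strongly_convex (mu k) (f k)) \<and>
         tau = 2 / (Min (mu ` {1..N}) + Max (L ` {1..N})))"
    and Gt: "G th = (\<lambda>v. tau *\<^sub>R v)"
    and it: "\<forall>k\<in>{1..N}. \<forall>t. x k (Suc t) = x k t - G (theta t) (grad k (x k t))"
    and gt: "\<forall>t. (1 / real N) * (\<Sum>k=1..N. f k (x k t - G (theta t) (grad k (x k t))))
              \<le> (1 / real N) * (\<Sum>k=1..N. f k (x k t - G th (grad k (x k t))))"
    and kk: "kk \<in> {1..N}"
  shows "(\<lambda>t. grad kk (x kk t)) \<longlonglongrightarrow> 0"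
proof -
  define Lmax where "Lmax = Max (L ` {1..N})"
  have ne: "L ` {1..N} \<noteq> {}" using N by auto
  have LleM: "L k \<le> Lmax" if "k \<in> {1..N}" for k
    unfolding Lmax_def using that by (simp add: Max_ge)
  have Lmpos: "0 < Lmax" using LleM[of 1] Lk N by force
  define c where "c k = tau * (1 - L k * tau / 2)" for k
  have taupos: "0 < tau" and cpos: "\<forall>k\<in>{1..N}. 0 < c k"
  proof -
    have "(0 < tau \<and> (\<forall>k\<in>{1..N}. L k * tau < 2))"
    proof (cases "tau = 1 / Lmax")
      case True
      show ?thesis
      proof (intro conjI ballI)
        show "0 < tau" using True Lmpos by simp
        fix k assume "k \<in> {1..N}"
        then have "L k / Lmax \<le> 1" using LleM Lmpos by simp
        then show "L k * tau < 2" using True by simp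
      qed
    next
      case False
      then have m: "\<forall>k\<in>{1..N}. 0 < mu k" and tv: "tau = 2 / (Min (mu ` {1..N}) + Lmax)"
        using tau Lmax_def by auto
      have "Min (mu ` {1..N}) \<in> mu ` {1..N}" using N by (intro Min_in) auto
      then have mm: "0 < Min (mu ` {1..N})" using m by auto
      have pp: "0 < Min (mu ` {1..N}) + Lmax" using mm Lmpos by simp
      show ?thesis
      proof (intro conjI ballI)
        show "0 < tau" using tv pp by simp
        fix k assume kin: "k \<in> {1..N}"
        have "L k < Min (mu ` {1..N}) + Lmax" using LleM[OF kin] mm by linarith
        then have "L k / (Min (mu ` {1..N}) + Lmax) < 1" using pp by simp
        moreover have "L k * tau = 2 * (L k / (Min (mu ` {1..N}) + Lmax))" using tv by simp
        ultimately show "L k * tau < 2" by simp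
      qed
    qed
    then show "0 < tau" "\<forall>k\<in>{1..N}. 0 < c k"
      by (auto simp: c_def intro!: mult_pos_pos)
  qed
  have desc: "f k (y - tau *\<^sub>R grad k y) \<le> f k y - c k * (norm (grad k y))^2"
    if k: "k \<in> {1..N}" for k y
  proof -
    have "f k (y + (- tau *\<^sub>R grad k y)) \<le> f k y + grad k y \<bullet> (- tau *\<^sub>R grad k y) + L k / 2 * (norm (- tau *\<^sub>R grad k y))^2"
      by (rule descent) (use der Lk k in auto)
    also have "\<dots> = f k y - c k * (norm (grad k y))^2"
    proof -
      have e1: "grad k y \<bullet> (- tau *\<^sub>R grad k y) = - tau * (norm (grad k y))^2"
        by (simp add: power2_norm_eq_inner)
      have e2: "(norm (- tau *\<^sub>R grad k y))^2 = tau^2 * (norm (grad k y))^2"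
        by (simp add: power_mult_distrib)
      show ?thesis unfolding e1 e2 by (simp add: c_def field_simps power2_eq_square)
    qed
    finally show ?thesis by simp
  qed
  define S where "S t = (\<Sum>k=1..N. f k (x k t))" for t
  define a where "a t = (\<Sum>k=1..N. c k * (norm (grad k (x k t)))^2)" for t
  have step: "S (Suc t) \<le> S t - a t" for t
  proof -
    have "S (Suc t) = (\<Sum>k=1..N. f k (x k t - G (theta t) (grad k (x k t))))"
      unfolding S_def using it by (intro sum.cong) auto
    also have "\<dots> \<le> (\<Sum>k=1..N. f k (x k t - tau *\<^sub>R grad k (x k t)))"
    proof -
      have Np: "0 < 1 / real N" using N by simp
      show ?thesis using gt[rule_format, of t] Gt mult_le_cancel_left_pos[OF Np] by simp
    qed
    also have "\<dots> \<le> (\<Sum>k=1..N. f k (x k t) - c k * (norm (grad k (x k t)))^2)"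
      by (intro sum_mono desc)
    also have "\<dots> = S t - a t" by (simp add: S_def a_def sum_subtractf)
    finally show ?thesis .
  qed
  have "\<forall>k\<in>{1..N}. \<exists>b. \<forall>y. b \<le> f k y" using bdd by (auto simp: bdd_below_def)
  then obtain b where b: "\<forall>k\<in>{1..N}. \<forall>y. b k \<le> f k y" by metis
  have Slow: "(\<Sum>k=1..N. b k) \<le> S t" for t
    unfolding S_def using b by (intro sum_mono) auto
  have tel: "(\<Sum>t<n. a t) \<le> S 0 - S n" for n
  proof (induction n)
    case (Suc n) then show ?case using step[of n] by simp
  qed simp
  define e where "e t = c kk * (norm (grad kk (x kk t)))^2" for t
  have ea: "e t \<le> a t" for t
    unfolding e_def a_def using cpos kk
    by (intro member_le_sum) (auto intro!: mult_nonneg_nonneg simp: order_less_imp_le)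
  have ckk: "0 < c kk" using cpos kk by blast
  have enn: "0 \<le> e t" for t using ckk by (simp add: e_def)
  have "summable e"
  proof (rule summableI_nonneg_bounded[OF enn])
    fix n
    have "(\<Sum>t<n. e t) \<le> (\<Sum>t<n. a t)" by (intro sum_mono ea)
    also have "\<dots> \<le> S 0 - (\<Sum>k=1..N. b k)" using tel[of n] Slow[of n] by linarith
    finally show "(\<Sum>t<n. e t) \<le> S 0 - (\<Sum>k=1..N. b k)" .
  qed
  then have "e \<longlonglongrightarrow> 0" by (rule summable_LIMSEQ_zero)
  then have "(\<lambda>t. e t / c kk) \<longlonglongrightarrow> 0 / c kk" using ckk by (intro tendsto_intros) auto
  then have "(\<lambda>t. (norm (grad kk (x kk t)))^2) \<longlonglongrightarrow> 0"
    using ckk by (simp add: e_def)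
  then have "(\<lambda>t. sqrt ((norm (grad kk (x kk t)))^2)) \<longlonglongrightarrow> sqrt 0"
    by (intro tendsto_intros)
  then have "(\<lambda>t. norm (grad kk (x kk t))) \<longlonglongrightarrow> 0" by simp
  then show ?thesis by (simp add: tendsto_norm_zero_iff)
qed

lemma claim: "thm13_claim G"
  unfolding thm13_claim_def Let_def
  apply (intro allI impI ballI)
  subgoal for N f grad L mu tau th x theta k
    apply (rule general[where N=N and f=f and grad=grad and L=L and mu=mu and tau=tau
          and th=th and x=x and theta=theta and kk=k and G=G])
            apply assumption+
    done
  done

theorem mainTheorem13:
  shows "thm13_claim (P1 :: real \<Rightarrow> real^'n \<Rightarrow> real^'n)
       \<and> thm13_claim (P2 :: real^'n \<Rightarrow> real^'n \<Rightarrow> real^'n)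
       \<and> thm13_claim (P3 :: real^'n^'n \<Rightarrow> real^'n \<Rightarrow> real^'n)
       \<and> thm13_claim (P4 :: (int \<times> int \<Rightarrow> real) \<Rightarrow> real^('m1::{finite,linorder} \<times> 'm2::{finite,linorder})
                             \<Rightarrow> real^('m1 \<times> 'm2))"
  by (simp add: claim)

end
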